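(* Let $V,V'$ be finite-dimensional complex vector spaces, $G\subset GL(V)$, $G'\subset GL(V')$ finite, and $F:V\to V'$ a holomorphic diffeomorphism mapping $G$-orbits onto $G'$-orbits. Let $f:Z=V/G\to Z'=V'/G'$ be the induced holomorphic diffeomorphism of orbit spaces. Then $f$ maps the isotropy type stratification of $Z$ onto that of $Z'$, and $f_*(D_Z)=D_{Z'}$.
   Context: Orbit spaces $V/G$ carry the quotient topology and the sheaf of $G$-invariant holomorphic functions; a holomorphic diffeomorphism of orbit spaces is an isomorphism of these locally ringed spaces. Isotropy type stratification: strata $Z_{(K)}=\pi(V_{(K)})$ where $V_{(K)}$ is the set of points whose isotropy group is conjugate to $K\subset G$. Reflection divisor: for each reflection hyperplane $H$ (fixed hyperplane of a complex reflection in $G$) let $e_H$ be the order of its pointwise stabiliser in $G$; $D_Z=\sum_S e_S\cdot S$, summed over the distinct hypersurfaces $S=\pi(H)$, with $e_S:=e_H$ (independent of $H$). *)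

theory Defs
  imports "HOL-Analysis.Analysis"
begin

definition finite_linear_group :: "(complex^'n^'n) set \<Rightarrow> bool" where
  "finite_linear_group G \<longleftrightarrow> finite G \<and> mat 1 \<in> G \<and>
     (\<forall>A\<in>G. invertible A \<and> matrix_inv A \<in> G) \<and> (\<forall>A\<in>G. \<forall>B\<in>G. A ** B \<in> G)"

definition orbit :: "(complex^'n^'n) set \<Rightarrow> complex^'n \<Rightarrow> (complex^'n) set" where
  "orbit G v = (\<lambda>A. A *v v) ` G"

text \<open>The orbit space Z = V/G as the set of orbits; the quotient map is orbit G.\<close>
definition orbit_space :: "(complex^'n^'n) set \<Rightarrow> (complex^'n) set set" where
  "orbit_space G = range (orbit G)"

definition isotropy :: "(complex^'n^'n) set \<Rightarrow> complex^'n \<Rightarrow> (complex^'n^'n) set" where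
  "isotropy G v = {A\<in>G. A *v v = v}"

definition conjugate_in :: "(complex^'n^'n) set \<Rightarrow> (complex^'n^'n) set \<Rightarrow> (complex^'n^'n) set \<Rightarrow> bool" where
  "conjugate_in G K L \<longleftrightarrow> (\<exists>g\<in>G. L = (\<lambda>A. g ** A ** matrix_inv g) ` K)"

definition iso_type_set :: "(complex^'n^'n) set \<Rightarrow> (complex^'n^'n) set \<Rightarrow> (complex^'n) set" where
  "iso_type_set G K = {v. conjugate_in G K (isotropy G v)}"

definition stratum :: "(complex^'n^'n) set \<Rightarrow> (complex^'n^'n) set \<Rightarrow> (complex^'n) set set" where
  "stratum G K = orbit G ` iso_type_set G K"

definition strata :: "(complex^'n^'n) set \<Rightarrow> (complex^'n) set set set" where
  "strata G = {stratum G K | K. K \<subseteq> G \<and> iso_type_set G K \<noteq> {}}"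

definition complex_hyperplane :: "(complex^'n) set \<Rightarrow> bool" where
  "complex_hyperplane H \<longleftrightarrow> (\<exists>a::complex^'n. a \<noteq> 0 \<and> H = {v. (\<Sum>i\<in>UNIV. a$i * v$i) = 0})"

definition complex_reflection :: "(complex^'n^'n) set \<Rightarrow> complex^'n^'n \<Rightarrow> bool" where
  "complex_reflection G g \<longleftrightarrow> g \<in> G \<and> g \<noteq> mat 1 \<and> complex_hyperplane {v. g *v v = v}"

definition reflection_hyperplane :: "(complex^'n^'n) set \<Rightarrow> (complex^'n) set \<Rightarrow> bool" where
  "reflection_hyperplane G H \<longleftrightarrow> (\<exists>g. complex_reflection G g \<and> H = {v. g *v v = v})"

definition pointwise_stabiliser :: "(complex^'n^'n) set \<Rightarrow> (complex^'n) set \<Rightarrow> (complex^'n^'n) set" where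
  "pointwise_stabiliser G H = {A\<in>G. \<forall>v\<in>H. A *v v = v}"

text \<open>Reflection divisor D_Z = \<Sum> e_S S, as a function from hypersurfaces of Z
  (sets of orbits) to multiplicities; e_S = e_H for any H with \<pi>(H) = S.\<close>
definition reflection_divisor :: "(complex^'n^'n) set \<Rightarrow> (complex^'n) set set \<Rightarrow> nat" where
  "reflection_divisor G S =
     (if \<exists>H. reflection_hyperplane G H \<and> S = orbit G ` H
      then card (pointwise_stabiliser G (SOME H. reflection_hyperplane G H \<and> S = orbit G ` H))
      else 0)"

definition divisor_pushforward :: "('a set \<Rightarrow> 'b set) \<Rightarrow> ('a set set \<Rightarrow> nat) \<Rightarrow> ('b set set \<Rightarrow> nat)" where
  "divisor_pushforward f D = (\<lambda>S'. \<Sum>S\<in>{S. D S \<noteq> 0 \<and> f ` S = S'}. D S)"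

definition holomorphic_map :: "(complex^'n \<Rightarrow> complex^'m) \<Rightarrow> bool" where
  "holomorphic_map F \<longleftrightarrow> (\<forall>x. \<exists>L. (F has_derivative L) (at x) \<and> (\<forall>c v. L (c *s v) = c *s L v))"

definition holomorphic_diffeo :: "(complex^'n \<Rightarrow> complex^'m) \<Rightarrow> bool" where
  "holomorphic_diffeo F \<longleftrightarrow> bij F \<and> holomorphic_map F \<and> holomorphic_map (inv F)"

text \<open>The induced map of orbit spaces f(\<pi> v) = \<pi>'(F v), i.e. an orbit O is sent to F ` O.\<close>
definition induced_map :: "(complex^'n \<Rightarrow> complex^'m) \<Rightarrow> (complex^'n) set \<Rightarrow> (complex^'m) set" where
  "induced_map F X = F ` X"

end

theory Submission
  imports Defs
begin


definition csub :: "(complex^'n) set \<Rightarrow> bool" where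
  "csub W \<longleftrightarrow> (\<forall>x\<in>W. \<forall>y\<in>W. x + y \<in> W) \<and> (\<forall>c. \<forall>x\<in>W. c *s x \<in> W)"

lemma csub_add: "csub W \<Longrightarrow> x \<in> W \<Longrightarrow> y \<in> W \<Longrightarrow> x + y \<in> W"
  unfolding csub_def by blast
lemma csub_scale: "csub W \<Longrightarrow> x \<in> W \<Longrightarrow> c *s x \<in> W"
  unfolding csub_def by blast
lemma csub_diff: "csub W \<Longrightarrow> x \<in> W \<Longrightarrow> y \<in> W \<Longrightarrow> x - y \<in> W"
proof -
  assume a: "csub W" "x \<in> W" "y \<in> W"
  have "x - y = x + (-1) *s y" by (simp add: vec_eq_iff)
  thus ?thesis using a csub_add csub_scale by metis
qed
lemma csub_unscale: "csub W \<Longrightarrow> c *s x \<in> W \<Longrightarrow> c \<noteq> 0 \<Longrightarrow> x \<in> W"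
proof -
  assume a: "csub W" "c *s x \<in> W" "c \<noteq> 0"
  have "x = inverse c *s (c *s x)" using a(3) by (simp add: vec_eq_iff)
  thus ?thesis using a csub_scale by metis
qed

lemma csub_kernel: "csub {w. (A::complex^'m^'n) *v w = B *v w}"
  unfolding csub_def by (simp add: matrix_vector_right_distrib vector_scalar_commute)

lemma csub_image: "csub W \<Longrightarrow> csub ((\<lambda>v. (A::complex^'n^'m) *v v) ` W)"
  unfolding csub_def
  by (auto simp: image_iff matrix_vector_right_distrib vector_scalar_commute) (metis matrix_vector_right_distrib, metis vector_scalar_commute)

lemma line_finite:
  assumes W: "csub W" and x: "x \<notin> W"
  shows "finite {z. x + z *s d \<in> W}"
proof -
  have "z1 = z2" if "x + z1 *s d \<in> W" "x + z2 *s d \<in> W" for z1 z2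
  proof (rule ccontr)
    assume ne: "z1 \<noteq> z2"
    have m: "(x + z1 *s d) - (x + z2 *s d) \<in> W" using that csub_diff W by blast
    have eq: "(x + z1 *s d) - (x + z2 *s d) = (z1 - z2) *s d" by (simp add: vec_eq_iff algebra_simps)
    from m have "(z1 - z2) *s d \<in> W" by (simp only: eq)
    hence "d \<in> W" by (rule csub_unscale[OF W]) (use ne in simp)
    hence "(x + z1 *s d) - z1 *s d \<in> W" using that csub_diff csub_scale W by blast
    thus False using x by simp
  qed
  hence "{z. x + z *s d \<in> W} = {} \<or> (\<exists>a. {z. x + z *s d \<in> W} = {a})" by blast
  thus ?thesis by auto
qed

lemma avoid:
  assumes "finite \<W>" "\<forall>W\<in>\<W>. csub W \<and> (\<exists>p\<in>H. p \<notin> W)" "csub H" "x0 \<in> H"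
  shows "\<exists>x\<in>H. \<forall>W\<in>\<W>. x \<notin> W"
  using assms(1,2)
proof (induction \<W> rule: finite_induct)
  case empty
  then show ?case using assms(4) by blast
next
  case (insert W \<W>)
  then obtain x where x: "x \<in> H" "\<forall>W\<in>\<W>. x \<notin> W" by auto
  obtain p where p: "p \<in> H" "p \<notin> W" and cW: "csub W" using insert by auto
  show ?case
  proof (cases "x \<in> W")
    case False
    then show ?thesis using x by auto
  next
    case True
    let ?Z = "insert 0 (\<Union>W'\<in>\<W>. {z. x + z *s (p - x) \<in> W'})"
    have "finite {z. x + z *s (p - x) \<in> W'}" if "W' \<in> \<W>" for W'
      using line_finite[of W' x "p - x"] that x insert.prems by auto
    hence "finite ?Z" using insert.hyps(1) by blast
    then obtain z where z: "z \<notin> ?Z" using ex_new_if_finite infinite_UNIV_char_0 by blast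
    define y where "y = x + z *s (p - x)"
    have yH: "y \<in> H" unfolding y_def using assms(3) x p csub_add csub_scale csub_diff by metis
    have "y \<notin> W"
    proof
      assume "y \<in> W"
      hence "y - x \<in> W" using True cW csub_diff by blast
      hence "z *s (p - x) \<in> W" unfolding y_def by simp
      hence "p - x \<in> W" using z cW csub_unscale by blast
      hence "(p - x) + x \<in> W" using True cW csub_add by blast
      thus False using p by simp
    qed
    moreover have "\<forall>W'\<in>\<W>. y \<notin> W'" using z unfolding y_def by auto
    ultimately show ?thesis using yH by auto
  qed
qed

lemma avoid_cover:
  assumes "finite \<W>" "\<forall>W\<in>\<W>. csub W" "csub H" "x0 \<in> H" "H \<subseteq> \<Union>\<W>"
  shows "\<exists>W\<in>\<W>. H \<subseteq> W"
  using avoid[OF assms(1) _ assms(3,4)] assms(2,5) by blast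

lemma line_cont: "continuous_on UNIV (\<lambda>z::complex. x + z *s (d::complex^'n))"
proof -
  have e: "(\<lambda>z::complex. x + z *s d) = (\<lambda>z. \<chi> i. x$i + z * d$i)" by (simp add: vec_eq_iff fun_eq_iff)
  show ?thesis unfolding e by (intro continuous_on_vec_lambda continuous_intros)
qed

lemma regular_set:
  fixes \<W> :: "(complex^'n) set set"
  assumes fin: "finite \<W>" and W: "\<forall>W\<in>\<W>. csub W \<and> W \<noteq> UNIV"
  shows "- \<Union>\<W> \<noteq> {}" "connected (- \<Union>\<W>)" "closure (- \<Union>\<W>) = UNIV"
proof -
  have "\<exists>x\<in>(UNIV::(complex^'n) set). \<forall>W\<in>\<W>. x \<notin> W"
    by (rule avoid[OF fin]) (use W in \<open>auto simp: csub_def\<close>)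
  then show ne: "- \<Union>\<W> \<noteq> {}" by auto
  let ?R = "- \<Union>\<W>"
  have img: "(\<lambda>z. x + z *s (y - x)) ` (UNIV - (\<Union>W\<in>\<W>. {z. x + z *s (y - x) \<in> W})) \<subseteq> ?R"
    for x y :: "complex^'n" by auto
  have finB: "finite (\<Union>W\<in>\<W>. {z. x + z *s (y - x) \<in> W})" if "x \<in> ?R" for x y :: "complex^'n"
  proof -
    have "finite {z. x + z *s (y - x) \<in> W}" if "W \<in> \<W>" for W
      using line_finite[of W x "y - x"] W \<open>x \<in> ?R\<close> that by blast
    thus ?thesis using fin by blast
  qed
  have "path_component ?R x y" if "x \<in> ?R" "y \<in> ?R" for x y
  proof -
    let ?B = "\<Union>W\<in>\<W>. {z. x + z *s (y - x) \<in> W}"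
    have "path_connected (UNIV - ?B)"
      apply (rule path_connected_open_diff_countable)
      apply simp apply simp apply (rule connected_UNIV)
      by (rule countable_finite[OF finB[OF that(1)]])
    hence pc: "path_connected ((\<lambda>z. x + z *s (y - x)) ` (UNIV - ?B))"
      by (intro path_connected_continuous_image continuous_on_subset[OF line_cont]) auto
    have "0 \<notin> ?B" "1 \<notin> ?B" using that by auto
    hence "x \<in> (\<lambda>z. x + z *s (y - x)) ` (UNIV - ?B)" "y \<in> (\<lambda>z. x + z *s (y - x)) ` (UNIV - ?B)"
       apply -
       apply (rule image_eqI[of _ _ 0]) apply simp apply blast
       apply (rule image_eqI[of _ _ 1]) apply simp apply blast done
    thus ?thesis using pc img unfolding path_component by blast
  qed
  hence "path_connected ?R" unfolding path_connected_component by blast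
  thus "connected ?R" by (rule path_connected_imp_connected)
  obtain x where x: "x \<in> ?R" using ne by blast
  have "y \<in> closure ?R" for y
  proof -
    let ?B = "\<Union>W\<in>\<W>. {z. x + z *s (y - x) \<in> W}"
    have "closure (UNIV - ?B) = UNIV"
    proof -
      have "interior ?B = {}" by (rule empty_interior_finite[OF finB[OF x]])
      hence "closure (- ?B) = UNIV" by (simp only: closure_complement) simp
      thus ?thesis by (simp only: Compl_eq_Diff_UNIV)
    qed
    hence "y \<in> (\<lambda>z. x + z *s (y - x)) ` closure (UNIV - ?B)"
      by (intro image_eqI[of _ _ 1]) auto
    also have "\<dots> \<subseteq> closure ((\<lambda>z. x + z *s (y - x)) ` (UNIV - ?B))"
      by (rule continuous_image_closure_subset[OF line_cont]) auto
    also have "\<dots> \<subseteq> closure ?R" by (rule closure_mono[OF img])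
    finally show ?thesis .
  qed
  thus "closure ?R = UNIV" by auto
qed



lemma flg_facts:
  assumes "finite_linear_group G"
  shows "finite G" "mat 1 \<in> G" "\<And>A. A \<in> G \<Longrightarrow> matrix_inv A \<in> G"
    "\<And>A. A \<in> G \<Longrightarrow> A ** matrix_inv A = mat 1" "\<And>A. A \<in> G \<Longrightarrow> matrix_inv A ** A = mat 1"
    "\<And>A B. A \<in> G \<Longrightarrow> B \<in> G \<Longrightarrow> A ** B \<in> G"
proof -
  show "finite G" "mat 1 \<in> G" "\<And>A. A \<in> G \<Longrightarrow> matrix_inv A \<in> G"
       "\<And>A B. A \<in> G \<Longrightarrow> B \<in> G \<Longrightarrow> A ** B \<in> G"
    using assms unfolding finite_linear_group_def by auto
  fix A assume "A \<in> G"
  hence "invertible A" using assms unfolding finite_linear_group_def by auto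
  hence "\<exists>A'. A ** A' = mat 1 \<and> A' ** A = mat 1" unfolding invertible_def .
  hence "A ** matrix_inv A = mat 1 \<and> matrix_inv A ** A = mat 1"
    unfolding matrix_inv_def by (rule someI_ex)
  thus "A ** matrix_inv A = mat 1" "matrix_inv A ** A = mat 1" by auto
qed

lemma matrix_inv_unique:
  fixes A B :: "'a::comm_ring_1^'n^'n"
  assumes "A ** B = mat 1" "B ** A = mat 1" shows "matrix_inv A = B"
proof -
  have "\<exists>A'. A ** A' = mat 1 \<and> A' ** A = mat 1" using assms by blast
  hence C: "A ** matrix_inv A = mat 1 \<and> matrix_inv A ** A = mat 1"
    unfolding matrix_inv_def by (rule someI_ex)
  have "matrix_inv A = matrix_inv A ** (A ** B)" using assms by (simp add: matrix_mul_rid)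
  also have "\<dots> = (matrix_inv A ** A) ** B" by (simp add: matrix_mul_assoc)
  also have "\<dots> = B" using C by (simp add: matrix_mul_lid)
  finally show ?thesis .
qed

lemma exists_phi:
  fixes G :: "(complex^'n^'n) set" and G' :: "(complex^'m^'m) set"
    and F :: "complex^'n \<Rightarrow> complex^'m"
  assumes flg: "finite_linear_group G" and flg': "finite_linear_group G'"
    and bij: "bij F" and cF: "continuous_on UNIV F" and cI: "continuous_on UNIV (inv F)"
    and orb: "\<forall>v. F ` orbit G v = orbit G' (F v)" and g: "g \<in> G"
  shows "\<exists>h\<in>G'. \<forall>v. F (g *v v) = h *v F v"
proof -
  have finG': "finite G'" using flg_facts[OF flg'] by simp
  define \<W> where "\<W> = (\<lambda>(h, h'). {w. h *v w = h' *v w}) ` {(h, h'). h \<in> G' \<and> h' \<in> G' \<and> h \<noteq> h'}"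
  have fW: "finite \<W>" unfolding \<W>_def
    by (rule finite_imageI, rule finite_subset[of _ "G' \<times> G'"]) (use finG' in auto)
  have W: "\<forall>W\<in>\<W>. csub W \<and> W \<noteq> UNIV"
  proof
    fix W assume "W \<in> \<W>"
    then obtain h h' where hh: "h \<in> G'" "h' \<in> G'" "h \<noteq> h'" "W = {w. h *v w = h' *v w}"
      unfolding \<W>_def by auto
    have "W \<noteq> UNIV" using hh matrix_eq[of h h'] by auto
    thus "csub W \<and> W \<noteq> UNIV" using hh csub_kernel by simp
  qed
  define R where "R = - \<Union>\<W>"
  note reg = regular_set[OF fW W, folded R_def]
  have Rchar: "h = h'" if "w \<in> R" "h \<in> G'" "h' \<in> G'" "h *v w = h' *v w" for w h h'
  proof (rule ccontr)
    assume "h \<noteq> h'"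
    hence "{w. h *v w = h' *v w} \<in> \<W>" unfolding \<W>_def using that by auto
    thus False using that unfolding R_def by auto
  qed
  define S where "S = inv F ` R"
  have Sconn: "connected S" unfolding S_def
    by (rule connected_continuous_image[OF continuous_on_subset[OF cI] reg(2)]) auto
  have "surj (inv F)" using bij bij_imp_bij_inv bij_is_surj by blast
  hence "UNIV = inv F ` closure R" using reg(3) by simp
  also have "\<dots> \<subseteq> closure S" unfolding S_def
    by (rule continuous_image_closure_subset[OF cI]) auto
  finally have Sdense: "closure S = UNIV" by auto
  have FS: "F v \<in> R" if "v \<in> S" for v using that unfolding S_def by (auto simp: surj_f_inv_f[OF bij_is_surj[OF bij]])
  have ex: "\<exists>h\<in>G'. F (g *v v) = h *v F v" for v
  proof -
    have "g *v v \<in> orbit G v" using g unfolding orbit_def by auto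
    hence "F (g *v v) \<in> orbit G' (F v)" using orb by blast
    thus ?thesis unfolding orbit_def by auto
  qed
  define A where "A h = {v. F (g *v v) = h *v F v}" for h
  have cl: "closed (A h)" for h unfolding A_def
  proof (rule closed_Collect_eq)
    show "continuous_on UNIV (\<lambda>v. F (g *v v))"
      by (rule continuous_on_compose2[OF cF]) (auto intro: linear_continuous_on matrix_vector_mul_bounded_linear)
    show "continuous_on UNIV (\<lambda>v. h *v F v)"
      by (rule continuous_on_compose2[OF _ cF, of UNIV]) (auto intro: linear_continuous_on matrix_vector_mul_bounded_linear)
  qed
  obtain v0 where v0: "v0 \<in> S" using reg(1) unfolding S_def by auto
  obtain h0 where h0: "h0 \<in> G'" "F (g *v v0) = h0 *v F v0" using ex by blast
  define E1 where "E1 = S \<inter> A h0"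
  define E2 where "E2 = S \<inter> \<Union>(A ` (G' - {h0}))"
  have c1: "closedin (top_of_set S) E1" unfolding E1_def by (rule closedin_closed_Int[OF cl])
  have c2: "closedin (top_of_set S) E2" unfolding E2_def
    by (rule closedin_closed_Int, rule closed_Union) (use finG' cl in auto)
  have u: "E1 \<union> E2 = S" unfolding E1_def E2_def A_def using ex by blast
  have d: "E1 \<inter> E2 = {}"
  proof -
    have False if "v \<in> S" "F (g *v v) = h0 *v F v" "h \<in> G'" "h \<noteq> h0" "F (g *v v) = h *v F v" for v h
      using Rchar[OF FS[OF that(1)] that(3) h0(1)] that by simp
    thus ?thesis unfolding E1_def E2_def A_def by blast
  qed
  have ne: "E1 \<noteq> {}" unfolding E1_def A_def using v0 h0 by blast
  have "E2 = {}" using Sconn c1 c2 u d ne unfolding connected_closedin_eq by blast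
  hence "S \<subseteq> A h0" using u unfolding E1_def by blast
  hence "closure S \<subseteq> A h0" using cl closure_minimal by blast
  hence "\<forall>v. F (g *v v) = h0 *v F v" using Sdense unfolding A_def by auto
  thus ?thesis using h0 by blast
qed



lemma holo_cont: "holomorphic_map F \<Longrightarrow> continuous_on UNIV F"
  unfolding holomorphic_map_def
  by (metis continuous_at_imp_continuous_on has_derivative_continuous)

locale orbset =
  fixes G :: "(complex^'n^'n) set" and G' :: "(complex^'m^'m) set"
    and F :: "complex^'n \<Rightarrow> complex^'m"
  assumes flg: "finite_linear_group G" and flg': "finite_linear_group G'"
    and hd: "holomorphic_diffeo F"
    and orb: "\<forall>v. F ` orbit G v = orbit G' (F v)"
begin

lemma bijF: "bij F" using hd unfolding holomorphic_diffeo_def by simp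
lemma injF: "inj F" using bijF bij_is_inj by blast
lemma surjF: "surj F" using bijF bij_is_surj by blast
lemma FI[simp]: "F (inv F w) = w" using surjF surj_f_inv_f by metis
lemma IF[simp]: "inv F (F v) = v" using injF inv_f_f by metis
lemma cF: "continuous_on UNIV F" using hd holo_cont unfolding holomorphic_diffeo_def by blast
lemma cI: "continuous_on UNIV (inv F)" using hd holo_cont unfolding holomorphic_diffeo_def by blast

lemma sym: "orbset G' G (inv F)"
proof
  show "finite_linear_group G'" "finite_linear_group G" using flg flg' by auto
  show "holomorphic_diffeo (inv F)"
    using hd bijF unfolding holomorphic_diffeo_def by (simp add: bij_imp_bij_inv inv_inv_eq)
  show "\<forall>w. inv F ` orbit G' w = orbit G (inv F w)"
  proof
    fix w
    have "orbit G' w = F ` orbit G (inv F w)" using orb by simp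
    thus "inv F ` orbit G' w = orbit G (inv F w)" by (simp add: image_image)
  qed
qed

definition phi :: "complex^'n^'n \<Rightarrow> complex^'m^'m" where
  "phi g = (THE h. h \<in> G' \<and> (\<forall>v. F (g *v v) = h *v F v))"

lemma phi_uniq:
  assumes "\<forall>v. F (g *v v) = h1 *v F v" "\<forall>v. F (g *v v) = h2 *v F v" shows "h1 = h2"
proof -
  have "h1 *v w = h2 *v w" for w using assms[rule_format, of "inv F w"] by simp
  thus ?thesis using matrix_eq by blast
qed

lemma phi: assumes "g \<in> G" shows "phi g \<in> G'" "\<And>v. F (g *v v) = phi g *v F v"
proof -
  obtain h where h: "h \<in> G'" "\<forall>v. F (g *v v) = h *v F v"
    using exists_phi[OF flg flg' bijF cF cI orb assms] by blast
  have "phi g = h" unfolding phi_def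
    by (rule the_equality) (use h phi_uniq in blast)+
  thus "phi g \<in> G'" "\<And>v. F (g *v v) = phi g *v F v" using h by auto
qed

lemma phi_eqI: "g \<in> G \<Longrightarrow> \<forall>v. F (g *v v) = h *v F v \<Longrightarrow> phi g = h"
  using phi phi_uniq by metis

abbreviation "psi \<equiv> orbset.phi G (inv F)"

lemma psi: assumes "h \<in> G'" shows "psi h \<in> G" "\<And>w. inv F (h *v w) = psi h *v inv F w"
  using orbset.phi[OF sym assms] by auto

lemma phi_psi: "h \<in> G' \<Longrightarrow> phi (psi h) = h"
proof -
  assume h: "h \<in> G'"
  have "F (psi h *v v) = h *v F v" for v
  proof -
    have "F (inv F (h *v F v)) = F (psi h *v v)" using psi(2)[OF h, of "F v"] by simp
    thus ?thesis by simp
  qed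
  thus ?thesis using phi_eqI psi(1)[OF h] by blast
qed

lemma psi_phi: "g \<in> G \<Longrightarrow> psi (phi g) = g"
proof -
  assume g: "g \<in> G"
  have "psi (phi g) *v v = g *v v" for v
    using psi(2)[OF phi(1)[OF g], of "F v"] phi(2)[OF g, of v] by (metis IF)
  thus ?thesis using matrix_eq by metis
qed

lemma phi_psi_img: "K' \<subseteq> G' \<Longrightarrow> phi ` psi ` K' = K'"
proof -
  assume K': "K' \<subseteq> G'"
  have "(\<lambda>h. phi (psi h)) ` K' = (\<lambda>h. h) ` K'" by (rule image_cong) (use phi_psi K' in auto)
  thus ?thesis by (simp add: image_image)
qed

lemma phi_inj: "inj_on phi G" by (metis inj_onI psi_phi)
lemma phi_img: "phi ` G = G'"
  using phi(1) phi_psi psi(1) by (auto simp: image_iff) metis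

lemma phi_mult: "A \<in> G \<Longrightarrow> B \<in> G \<Longrightarrow> phi (A ** B) = phi A ** phi B"
proof -
  assume AB: "A \<in> G" "B \<in> G"
  have "F ((A ** B) *v v) = (phi A ** phi B) *v F v" for v
    using phi(2)[OF AB(1), of "B *v v"] phi(2)[OF AB(2), of v]
    by (simp add: matrix_vector_mul_assoc[symmetric])
  thus ?thesis using phi_eqI flg_facts(6)[OF flg AB] by blast
qed

lemma phi_id: "phi (mat 1) = mat 1"
  using phi_eqI[OF flg_facts(2)[OF flg]] by (simp add: matrix_vector_mul_lid)

lemma phi_minv: "g \<in> G \<Longrightarrow> phi (matrix_inv g) = matrix_inv (phi g)"
proof -
  assume g: "g \<in> G"
  have gi: "matrix_inv g \<in> G" using flg_facts(3)[OF flg g] .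
  have "phi g ** phi (matrix_inv g) = mat 1" "phi (matrix_inv g) ** phi g = mat 1"
    using phi_mult[OF g gi] phi_mult[OF gi g] flg_facts(4,5)[OF flg g] phi_id by auto
  thus ?thesis using matrix_inv_unique by metis
qed

lemma phi_conj: "g \<in> G \<Longrightarrow> A \<in> G \<Longrightarrow> phi (g ** A ** matrix_inv g) = phi g ** phi A ** matrix_inv (phi g)"
  using phi_mult phi_minv flg_facts(3,6)[OF flg] by metis

lemma isotropy_F: "isotropy G' (F v) = phi ` isotropy G v"
proof
  show "isotropy G' (F v) \<subseteq> phi ` isotropy G v"
  proof
    fix h assume "h \<in> isotropy G' (F v)"
    hence h: "h \<in> G'" "h *v F v = F v" unfolding isotropy_def by auto
    have "F (psi h *v v) = F v" using phi(2)[OF psi(1)[OF h(1)], of v] phi_psi[OF h(1)] h by simp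
    hence "psi h *v v = v" using injF by (simp add: inj_eq)
    hence "psi h \<in> isotropy G v" using psi(1)[OF h(1)] unfolding isotropy_def by auto
    thus "h \<in> phi ` isotropy G v" using phi_psi[OF h(1)] by force
  qed
  show "phi ` isotropy G v \<subseteq> isotropy G' (F v)"
    unfolding isotropy_def using phi by (auto simp flip: phi(2))
qed

lemma conj_transfer:
  assumes K: "K \<subseteq> G" and L: "L \<subseteq> G"
  shows "conjugate_in G' (phi ` K) (phi ` L) \<longleftrightarrow> conjugate_in G K L"
proof
  assume "conjugate_in G K L"
  then obtain g where g: "g \<in> G" "L = (\<lambda>A. g ** A ** matrix_inv g) ` K" unfolding conjugate_in_def by blast
  have "(\<lambda>A. phi (g ** A ** matrix_inv g)) ` K = (\<lambda>A. phi g ** phi A ** matrix_inv (phi g)) ` K"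
    by (rule image_cong) (use phi_conj[OF g(1)] K in auto)
  hence "phi ` L = (\<lambda>A. phi g ** A ** matrix_inv (phi g)) ` phi ` K"
    unfolding g(2) image_image .
  thus "conjugate_in G' (phi ` K) (phi ` L)" unfolding conjugate_in_def using phi(1)[OF g(1)] by blast
next
  assume "conjugate_in G' (phi ` K) (phi ` L)"
  then obtain h where h: "h \<in> G'" "phi ` L = (\<lambda>A. h ** A ** matrix_inv h) ` phi ` K"
    unfolding conjugate_in_def by blast
  define g where "g = psi h"
  have g: "g \<in> G" "phi g = h" unfolding g_def using psi(1) phi_psi h by auto
  have cK: "(\<lambda>A. g ** A ** matrix_inv g) ` K \<subseteq> G" using K g flg_facts(3,6)[OF flg] by blast
  have "(\<lambda>A. phi (g ** A ** matrix_inv g)) ` K = (\<lambda>A. phi g ** phi A ** matrix_inv (phi g)) ` K"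
    by (rule image_cong) (use phi_conj[OF g(1)] K in auto)
  hence "phi ` L = phi ` ((\<lambda>A. g ** A ** matrix_inv g) ` K)"
    unfolding h(2) image_image g(2)[symmetric] by simp
  hence "L = (\<lambda>A. g ** A ** matrix_inv g) ` K"
    using inj_on_image_eq_iff[OF phi_inj L cK] by blast
  thus "conjugate_in G K L" unfolding conjugate_in_def using g by blast
qed

lemma iso_type_F: "K \<subseteq> G \<Longrightarrow> iso_type_set G' (phi ` K) = F ` iso_type_set G K"
proof -
  assume K: "K \<subseteq> G"
  have isoG: "isotropy G v \<subseteq> G" for v unfolding isotropy_def by auto
  have "F v \<in> iso_type_set G' (phi ` K) \<longleftrightarrow> v \<in> iso_type_set G K" for v
    unfolding iso_type_set_def using conj_transfer[OF K isoG] isotropy_F by simp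
  thus ?thesis using surjF injF by (auto simp: image_iff) (metis FI)
qed

lemma induced_orbits: "induced_map F ` (orbit G ` X) = orbit G' ` (F ` X)"
  unfolding induced_map_def image_image using orb by simp

lemma stratum_F: "K \<subseteq> G \<Longrightarrow> induced_map F ` stratum G K = stratum G' (phi ` K)"
  unfolding stratum_def induced_orbits using iso_type_F by simp

lemma strata_F: "(\<lambda>S. induced_map F ` S) ` strata G = strata G'"
proof
  show "(\<lambda>S. induced_map F ` S) ` strata G \<subseteq> strata G'"
  proof
    fix S' assume "S' \<in> (\<lambda>S. induced_map F ` S) ` strata G"
    then obtain K where K: "K \<subseteq> G" "iso_type_set G K \<noteq> {}" "S' = induced_map F ` stratum G K"
      unfolding strata_def by blast
    have "phi ` K \<subseteq> G'" using K phi by auto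
    moreover have "iso_type_set G' (phi ` K) \<noteq> {}" using iso_type_F K by simp
    ultimately show "S' \<in> strata G'" unfolding strata_def using stratum_F K by blast
  qed
  show "strata G' \<subseteq> (\<lambda>S. induced_map F ` S) ` strata G"
  proof
    fix S' assume "S' \<in> strata G'"
    then obtain K' where K': "K' \<subseteq> G'" "iso_type_set G' K' \<noteq> {}" "S' = stratum G' K'"
      unfolding strata_def by blast
    define K where "K = psi ` K'"
    have K: "K \<subseteq> G" "phi ` K = K'" unfolding K_def using K' psi(1) phi_psi_img by auto
    have "iso_type_set G K \<noteq> {}" using iso_type_F[OF K(1)] K(2) K'(2) by auto
    moreover have "S' = induced_map F ` stratum G K" using stratum_F[OF K(1)] K(2) K'(3) by simp
    ultimately show "S' \<in> (\<lambda>S. induced_map F ` S) ` strata G" unfolding strata_def using K(1) by blast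
  qed
qed

end



lemma conj_apply:
  fixes g A :: "complex^'n^'n"
  assumes "matrix_inv g ** g = mat 1"
  shows "(g ** A ** matrix_inv g) *v (g *v u) = g *v (A *v u)"
proof -
  have "(g ** A ** matrix_inv g) *v (g *v u) = (g ** A) *v ((matrix_inv g ** g) *v u)"
    by (simp add: matrix_vector_mul_assoc matrix_mul_assoc)
  also have "\<dots> = g *v (A *v u)" using assms by (simp add: matrix_vector_mul_assoc)
  finally show ?thesis .
qed

lemma conj_inj:
  fixes g :: "complex^'n^'n"
  assumes "matrix_inv g ** g = mat 1" "g ** matrix_inv g = mat 1"
  shows "inj (\<lambda>A. g ** A ** matrix_inv g)"
proof (rule injI)
  fix A B assume e: "g ** A ** matrix_inv g = g ** B ** matrix_inv g"
  have r: "matrix_inv g ** (g ** X ** matrix_inv g) ** g = X" for X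
  proof -
    have "matrix_inv g ** (g ** X ** matrix_inv g) ** g = (matrix_inv g ** g) ** X ** (matrix_inv g ** g)"
      by (simp add: matrix_mul_assoc)
    thus ?thesis using assms by (simp add: matrix_mul_lid matrix_mul_rid)
  qed
  have "A = matrix_inv g ** (g ** A ** matrix_inv g) ** g" by (rule r[symmetric])
  also have "\<dots> = matrix_inv g ** (g ** B ** matrix_inv g) ** g" by (simp only: e)
  also have "\<dots> = B" by (rule r)
  finally show "A = B" .
qed

lemma fix_csub: "csub {v. (g::complex^'n^'n) *v v = v}"
  using csub_kernel[of g "mat 1"] by (simp add: matrix_vector_mul_lid)

lemma card_pst_le:
  assumes flg: "finite_linear_group G" and h1: "reflection_hyperplane G H1"
    and h2: "reflection_hyperplane G H2" and eq: "orbit G ` H1 = orbit G ` H2"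
  shows "card (pointwise_stabiliser G H1) \<le> card (pointwise_stabiliser G H2)"
proof -
  note ff = flg_facts[OF flg]
  obtain g2 where H2: "H2 = {v. g2 *v v = v}" using h2 unfolding reflection_hyperplane_def by blast
  obtain g1 where H1: "H1 = {v. g1 *v v = v}" using h1 unfolding reflection_hyperplane_def by blast
  have cov: "H2 \<subseteq> \<Union>((\<lambda>g. (\<lambda>v. g *v v) ` H1) ` G)"
  proof
    fix v assume v: "v \<in> H2"
    then obtain u where u: "u \<in> H1" "orbit G v = orbit G u" using eq by (metis imageE imageI)
    have "v \<in> orbit G v" unfolding orbit_def using ff(2) by (auto simp: image_iff matrix_vector_mul_lid intro!: bexI[of _ "mat 1"])
    then obtain g where "g \<in> G" "v = g *v u" using u(2) unfolding orbit_def by auto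
    thus "v \<in> \<Union>((\<lambda>g. (\<lambda>v. g *v v) ` H1) ` G)" using u(1) by blast
  qed
  have "\<exists>W\<in>(\<lambda>g. (\<lambda>v. g *v v) ` H1) ` G. H2 \<subseteq> W"
  proof (rule avoid_cover[OF _ _ _ _ cov])
    show "finite ((\<lambda>g. (*v) g ` H1) ` G)" using ff(1) by simp
    show "\<forall>W\<in>(\<lambda>g. (*v) g ` H1) ` G. csub W" using csub_image fix_csub H1 by blast
    show "csub H2" using fix_csub H2 by simp
    show "0 \<in> H2" using H2 by simp
  qed
  then obtain g where g: "g \<in> G" "H2 \<subseteq> (\<lambda>v. g *v v) ` H1" by blast
  let ?c = "\<lambda>A. g ** A ** matrix_inv g"
  have "inj_on ?c (pointwise_stabiliser G H1)"
    using conj_inj[OF ff(5)[OF g(1)] ff(4)[OF g(1)]] inj_on_subset by blast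
  moreover have "?c ` pointwise_stabiliser G H1 \<subseteq> pointwise_stabiliser G H2"
  proof
    fix B assume "B \<in> ?c ` pointwise_stabiliser G H1"
    then obtain A where A: "A \<in> G" "\<forall>u\<in>H1. A *v u = u" "B = ?c A" unfolding pointwise_stabiliser_def by auto
    have "B \<in> G" using A g ff by auto
    moreover have "B *v v = v" if vH: "v \<in> H2" for v
    proof -
      obtain u where "u \<in> H1" "v = g *v u" using g(2) vH by auto
      thus ?thesis using A conj_apply[OF ff(5)[OF g(1)]] by simp
    qed
    ultimately show "B \<in> pointwise_stabiliser G H2" unfolding pointwise_stabiliser_def by auto
  qed
  moreover have "finite (pointwise_stabiliser G H2)"
    using ff(1) unfolding pointwise_stabiliser_def by auto
  ultimately show ?thesis by (rule card_inj_on_le)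
qed

lemma rd_eq:
  assumes flg: "finite_linear_group G" and h: "reflection_hyperplane G H"
  shows "reflection_divisor G (orbit G ` H) = card (pointwise_stabiliser G H)"
proof -
  have ex: "\<exists>H'. reflection_hyperplane G H' \<and> orbit G ` H = orbit G ` H'" using h by blast
  define H0 where "H0 = (SOME H'. reflection_hyperplane G H' \<and> orbit G ` H = orbit G ` H')"
  have H0: "reflection_hyperplane G H0 \<and> orbit G ` H = orbit G ` H0"
    unfolding H0_def by (rule someI_ex[OF ex])
  have "card (pointwise_stabiliser G H0) = card (pointwise_stabiliser G H)"
    using card_pst_le[OF flg h, of H0] card_pst_le[OF flg _ h, of H0] H0 by simp
  thus ?thesis unfolding reflection_divisor_def using ex H0_def by simp
qed

lemma rd_nz:
  assumes flg: "finite_linear_group G"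
  shows "reflection_divisor G S \<noteq> 0 \<longleftrightarrow> (\<exists>H. reflection_hyperplane G H \<and> S = orbit G ` H)"
proof
  assume "reflection_divisor G S \<noteq> 0"
  thus "\<exists>H. reflection_hyperplane G H \<and> S = orbit G ` H" unfolding reflection_divisor_def by metis
next
  assume "\<exists>H. reflection_hyperplane G H \<and> S = orbit G ` H"
  then obtain H where H: "reflection_hyperplane G H" "S = orbit G ` H" by blast
  have "mat 1 \<in> pointwise_stabiliser G H" using flg_facts(2)[OF flg]
    unfolding pointwise_stabiliser_def by (simp add: matrix_vector_mul_lid)
  moreover have "finite (pointwise_stabiliser G H)"
    using flg_facts(1)[OF flg] unfolding pointwise_stabiliser_def by auto
  ultimately have "card (pointwise_stabiliser G H) \<noteq> 0" by auto
  thus "reflection_divisor G S \<noteq> 0" using rd_eq[OF flg H(1)] H(2) by simp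
qed

context orbset
begin

lemma fix_F: "g \<in> G \<Longrightarrow> F ` {v. g *v v = v} = {w. phi g *v w = w}"
proof -
  assume g: "g \<in> G"
  have e: "phi g *v w = w \<longleftrightarrow> g *v inv F w = inv F w" for w
  proof -
    have h1: "phi g *v w = F (g *v inv F w)" using phi(2)[OF g, of "inv F w"] by simp
    have h2: "F (g *v inv F w) = F (inv F w) \<longleftrightarrow> g *v inv F w = inv F w" by (rule inj_eq[OF injF])
    show ?thesis using h1 h2 by simp
  qed
  show ?thesis
  proof
    show "F ` {v. g *v v = v} \<subseteq> {w. phi g *v w = w}"
    proof
      fix w assume "w \<in> F ` {v. g *v v = v}"
      then obtain v where v: "g *v v = v" "w = F v" by blast
      have "inv F w = v" using v(2) by simp
      thus "w \<in> {w. phi g *v w = w}" using e[of w] v(1) by simp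
    qed
    show "{w. phi g *v w = w} \<subseteq> F ` {v. g *v v = v}"
    proof
      fix w assume "w \<in> {w. phi g *v w = w}"
      hence "inv F w \<in> {v. g *v v = v}" using e by simp
      thus "w \<in> F ` {v. g *v v = v}" by (rule image_eqI[rotated]) simp
    qed
  qed
qed

lemma hyper_F:
  assumes g: "g \<in> G" and hyp: "complex_hyperplane {v. g *v v = v}"
  shows "complex_hyperplane {w. phi g *v w = w}"
proof -
  obtain L where L: "(F has_derivative L) (at 0)" "\<And>c v. L (c *s v) = c *s L v"
    using hd unfolding holomorphic_diffeo_def holomorphic_map_def by blast
  obtain L' where L': "(inv F has_derivative L') (at (F 0))" "\<And>c v. L' (c *s v) = c *s L' v"
    using hd unfolding holomorphic_diffeo_def holomorphic_map_def by blast
  have bl: "bounded_linear ((*v) A)" for A :: "complex^'k^'k" by (rule matrix_vector_mul_bounded_linear)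
  have d1: "((F \<circ> (\<lambda>v. g *v v)) has_derivative (L \<circ> (\<lambda>v. g *v v))) (at 0)"
    by (rule diff_chain_at[OF bounded_linear_imp_has_derivative[OF bl]]) (simp add: L(1))
  have d2: "(((\<lambda>w. phi g *v w) \<circ> F) has_derivative ((\<lambda>w. phi g *v w) \<circ> L)) (at 0)"
    by (rule diff_chain_at[OF L(1) bounded_linear_imp_has_derivative[OF bl]])
  have "F \<circ> (\<lambda>v. g *v v) = (\<lambda>w. phi g *v w) \<circ> F" using phi(2)[OF g] by auto
  hence comm: "L \<circ> (\<lambda>v. g *v v) = (\<lambda>w. phi g *v w) \<circ> L" using d1 d2 has_derivative_unique by metis
  have d3: "((inv F \<circ> F) has_derivative (L' \<circ> L)) (at 0)" by (rule diff_chain_at[OF L(1) L'(1)])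
  have "inv F \<circ> F = id" by auto
  hence LL': "L' \<circ> L = id" using d3 has_derivative_id has_derivative_unique by metis
  have d4: "((F \<circ> inv F) has_derivative (L \<circ> L')) (at (F 0))" by (rule diff_chain_at[OF L'(1)]) (simp add: L(1))
  have "F \<circ> inv F = id" by auto
  hence L'L: "L \<circ> L' = id" using d4 has_derivative_id has_derivative_unique by metis
  have LL'v[simp]: "L' (L v) = v" for v using LL' by (metis comp_apply id_apply)
  have L'Lv[simp]: "L (L' w) = w" for w using L'L by (metis comp_apply id_apply)
  have fixeq: "phi g *v w = w \<longleftrightarrow> g *v L' w = L' w" for w
  proof -
    have "phi g *v w = L (g *v L' w)" using fun_cong[OF comm, of "L' w"] by simp
    thus ?thesis by (metis LL'v L'Lv)
  qed
  obtain a :: "complex^'n" where a: "a \<noteq> 0" "{v. g *v v = v} = {v. (\<Sum>i\<in>UNIV. a$i * v$i) = 0}"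
    using hyp unfolding complex_hyperplane_def by blast
  have ain: "g *v v = v \<longleftrightarrow> (\<Sum>i\<in>UNIV. a$i * v$i) = 0" for v using a(2) by blast
  have linL': "linear L'" using has_derivative_bounded_linear[OF L'(1)] bounded_linear.linear by blast
  define b :: "complex^'m" where "b = (\<chi> j. \<Sum>i\<in>UNIV. a$i * (L' (axis j 1))$i)"
  have expand: "L' w = (\<Sum>j\<in>UNIV. w$j *s L' (axis j 1))" for w
  proof -
    have "L' w = L' (\<Sum>j\<in>UNIV. w$j *s axis j 1)" by (simp add: basis_expansion)
    also have "\<dots> = (\<Sum>j\<in>UNIV. L' (w$j *s axis j 1))" by (rule real_vector.linear_sum[OF linL'])
    also have "\<dots> = (\<Sum>j\<in>UNIV. w$j *s L' (axis j 1))" using L'(2) by simp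
    finally show ?thesis .
  qed
  have keyb: "(\<Sum>i\<in>UNIV. a$i * (L' w)$i) = (\<Sum>j\<in>UNIV. b$j * w$j)" for w
  proof -
    have "(\<Sum>i\<in>UNIV. a$i * (L' w)$i) = (\<Sum>i\<in>UNIV. \<Sum>j\<in>UNIV. a$i * (w$j * (L' (axis j 1))$i))"
      by (subst expand) (simp add: sum_component sum_distrib_left)
    also have "\<dots> = (\<Sum>j\<in>UNIV. \<Sum>i\<in>UNIV. a$i * (w$j * (L' (axis j 1))$i))" by (rule sum.swap)
    also have "\<dots> = (\<Sum>j\<in>UNIV. b$j * w$j)" unfolding b_def
      by (simp add: sum_distrib_left sum_distrib_right algebra_simps)
    finally show ?thesis .
  qed
  have "b \<noteq> 0"
  proof
    assume b0: "b = 0"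
    have "a$k = 0" for k
    proof -
      have "(\<Sum>i\<in>UNIV. a$i * (L' (L (axis k 1)))$i) = 0" using keyb[of "L (axis k 1)"] b0 by simp
      thus ?thesis by (simp add: axis_def if_distrib cong: if_cong)
    qed
    thus False using a(1) by (simp add: vec_eq_iff)
  qed
  moreover have "{w. phi g *v w = w} = {w. (\<Sum>j\<in>UNIV. b$j * w$j) = 0}"
    using fixeq ain keyb by auto
  ultimately show ?thesis unfolding complex_hyperplane_def by blast
qed

lemma refl_F: "reflection_hyperplane G H \<Longrightarrow> reflection_hyperplane G' (F ` H)"
proof -
  assume "reflection_hyperplane G H"
  then obtain g where g: "complex_reflection G g" "H = {v. g *v v = v}" unfolding reflection_hyperplane_def by blast
  have gG: "g \<in> G" "g \<noteq> mat 1" "complex_hyperplane {v. g *v v = v}" using g unfolding complex_reflection_def by auto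
  have "phi g \<noteq> phi (mat 1)" using inj_on_eq_iff[OF phi_inj gG(1) flg_facts(2)[OF flg]] gG(2) by simp
  hence "phi g \<noteq> mat 1" using phi_id by simp
  hence "complex_reflection G' (phi g)"
    unfolding complex_reflection_def using phi(1)[OF gG(1)] hyper_F[OF gG(1,3)] by simp
  thus ?thesis unfolding reflection_hyperplane_def using g(2) fix_F[OF gG(1)] by blast
qed

lemma pst_F: "pointwise_stabiliser G' (F ` H) = phi ` pointwise_stabiliser G H"
proof
  show "pointwise_stabiliser G' (F ` H) \<subseteq> phi ` pointwise_stabiliser G H"
  proof
    fix h assume "h \<in> pointwise_stabiliser G' (F ` H)"
    hence h: "h \<in> G'" "\<forall>v\<in>H. h *v F v = F v" unfolding pointwise_stabiliser_def by auto
    have "psi h *v v = v" if "v \<in> H" for v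
    proof -
      have "F (psi h *v v) = F v" using phi(2)[OF psi(1)[OF h(1)], of v] phi_psi[OF h(1)] h(2) that by simp
      thus ?thesis using injF by (simp add: inj_eq)
    qed
    hence "psi h \<in> pointwise_stabiliser G H" using psi(1)[OF h(1)] unfolding pointwise_stabiliser_def by auto
    thus "h \<in> phi ` pointwise_stabiliser G H" using phi_psi[OF h(1)] by force
  qed
  show "phi ` pointwise_stabiliser G H \<subseteq> pointwise_stabiliser G' (F ` H)"
  proof
    fix B assume "B \<in> phi ` pointwise_stabiliser G H"
    then obtain A where A: "A \<in> G" "\<forall>v\<in>H. A *v v = v" "B = phi A"
      unfolding pointwise_stabiliser_def by blast
    have "B *v w = w" if "w \<in> F ` H" for w
    proof -
      obtain v where v: "v \<in> H" "w = F v" using \<open>w \<in> F ` H\<close> by blast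
      have "B *v w = F (A *v v)" using phi(2)[OF A(1), of v] A(3) v(2) by simp
      thus ?thesis using A(2) v by simp
    qed
    thus "B \<in> pointwise_stabiliser G' (F ` H)"
      unfolding pointwise_stabiliser_def using phi(1)[OF A(1)] A(3) by blast
  qed
qed

lemma card_pst_F: "card (pointwise_stabiliser G' (F ` H)) = card (pointwise_stabiliser G H)"
proof -
  have "pointwise_stabiliser G H \<subseteq> G" unfolding pointwise_stabiliser_def by blast
  thus ?thesis unfolding pst_F by (rule card_image[OF inj_on_subset[OF phi_inj]])
qed

lemma rd_F: "reflection_hyperplane G H \<Longrightarrow>
   reflection_divisor G' (induced_map F ` orbit G ` H) = reflection_divisor G (orbit G ` H)"
proof -
  assume H: "reflection_hyperplane G H"
  have "reflection_divisor G' (orbit G' ` F ` H) = card (pointwise_stabiliser G' (F ` H))"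
    by (rule rd_eq[OF flg' refl_F[OF H]])
  also have "\<dots> = card (pointwise_stabiliser G H)" by (rule card_pst_F)
  also have "\<dots> = reflection_divisor G (orbit G ` H)" by (rule rd_eq[OF flg H, symmetric])
  finally show ?thesis unfolding induced_orbits .
qed

lemma push_F: "divisor_pushforward (induced_map F) (reflection_divisor G) = reflection_divisor G'"
proof
  fix S'
  let ?T = "{S. reflection_divisor G S \<noteq> 0 \<and> induced_map F ` S = S'}"
  have injf: "inj (induced_map F)" unfolding induced_map_def by (rule injI) (simp add: inj_image_eq_iff[OF injF])
  show "divisor_pushforward (induced_map F) (reflection_divisor G) S' = reflection_divisor G' S'"
  proof (cases "\<exists>H'. reflection_hyperplane G' H' \<and> S' = orbit G' ` H'")
    case True
    then obtain H' where H': "reflection_hyperplane G' H'" "S' = orbit G' ` H'" by blast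
    define H where "H = inv F ` H'"
    have H: "reflection_hyperplane G H" unfolding H_def using orbset.refl_F[OF sym H'(1)] .
    have FH: "F ` H = H'" unfolding H_def by (simp add: image_image)
    have fS0: "induced_map F ` orbit G ` H = S'" using H'(2) FH induced_orbits by simp
    have "?T = {orbit G ` H}"
    proof
      show "?T \<subseteq> {orbit G ` H}"
      proof
        fix S assume "S \<in> ?T"
        hence "induced_map F ` S = induced_map F ` orbit G ` H" using fS0 by simp
        hence "S = orbit G ` H" by (rule iffD1[OF inj_image_eq_iff[OF injf]])
        thus "S \<in> {orbit G ` H}" by simp
      qed
      have "reflection_divisor G (orbit G ` H) \<noteq> 0" by (subst rd_nz[OF flg]) (use H in blast)
      thus "{orbit G ` H} \<subseteq> ?T" using fS0 by blast
    qed
    thus ?thesis unfolding divisor_pushforward_def using rd_F[OF H] fS0 by simp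
  next
    case False
    have "?T = {}"
    proof -
      have False if nz: "reflection_divisor G S \<noteq> 0" and im: "induced_map F ` S = S'" for S
      proof -
        obtain H where H: "reflection_hyperplane G H" "S = orbit G ` H" using iffD1[OF rd_nz[OF flg] nz] by blast
        have "S' = orbit G' ` (F ` H)" using im H(2) induced_orbits by simp
        thus False using False refl_F[OF H(1)] by blast
      qed
      thus ?thesis by blast
    qed
    moreover have "\<not> reflection_divisor G' S' \<noteq> 0" by (subst rd_nz[OF flg']) (rule False)
    ultimately show ?thesis unfolding divisor_pushforward_def by (simp only: sum.empty) simp
  qed
qed

end

theorem corollary5p2:
  fixes G :: "(complex^'n^'n) set" and G' :: "(complex^'m^'m) set"
    and F :: "complex^'n \<Rightarrow> complex^'m"
  assumes "finite_linear_group G" and "finite_linear_group G'"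
    and "holomorphic_diffeo F"
    and "\<forall>v. F ` orbit G v = orbit G' (F v)"
  shows "(\<lambda>S. induced_map F ` S) ` strata G = strata G'
     \<and> divisor_pushforward (induced_map F) (reflection_divisor G) = reflection_divisor G'"
proof -
  interpret orbset G G' F using assms by (unfold_locales) auto
  show ?thesis using strata_F push_F by simp
qed

end
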